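(* Let $d\in\mathbb{N}$, $\mathfrak{d}\in\{1,\ldots,d-1\}$, let $\mathcal{N}\subseteq\mathbb{R}^d$ be a non-empty $\mathfrak{d}$-dimensional $C^1$-submanifold of $\mathbb{R}^d$, and for every $x_0\in\mathcal{N}$, $R,\delta\in(0,\infty)$ let \[V_{R,\delta}(x_0)=\{x+v\colon x\in\overline{B}_R(x_0)\cap\mathcal{N},\ v\in T_x\mathcal{N}^\perp,\ |v|<\delta\}.\] Then for every $x_0\in\mathcal{N}$ and every projection neighborhood $V_*(x_0)$ of $x_0$ (relative to $\mathcal{N}$) there exist $R_0,\delta_0\in(0,\infty)$ such that for every $R\in(0,R_0]$, $\delta\in(0,\delta_0]$ it holds that $\overline{V_{R,\delta}(x_0)}\subseteq V_*(x_0)$, that \[V_{R,\delta}(x_0)=\{x\in\mathbb{R}^d\colon \operatorname{d}(x,\mathcal{N})=\operatorname{d}(x,\overline{B}_R(x_0)\cap\mathcal{N})<\delta\},\] and that $(x+v)_*=x$ for every $x\in\overline{B}_R(x_0)\cap\mathcal{N}$ and every $v\in T_x\mathcal{N}^\perp$ with $|v|<\delta$.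
   Context: $\overline{B}_R(x_0)$ is the closed Euclidean ball of radius $R$ about $x_0$; $\operatorname{d}(x,\mathcal{A})=\inf_{\vartheta\in\mathcal{A}}|x-\vartheta|$; $T_x\mathcal{N}^\perp$ is the orthogonal complement of the tangent space of $\mathcal{N}$ at $x$. A projection neighborhood $V_*(x_0)$ of $x_0\in\mathcal{N}$ is an open set containing $x_0$ such that for every $x\in V_*(x_0)$ there is a unique $x_*\in\mathcal{N}$ with $|x-x_*|=\operatorname{d}(x,\mathcal{N})$, and the map $x\mapsto x_*$ is continuously differentiable on $V_*(x_0)$. *)

theory Defs
  imports "HOL-Analysis.Analysis"
begin

definition C1_on :: "'a::euclidean_space set \<Rightarrow> ('a \<Rightarrow> 'b::real_normed_vector) \<Rightarrow> bool" where
  "C1_on U f \<longleftrightarrow> (\<exists>f' :: 'a \<Rightarrow> 'a \<Rightarrow>\<^sub>L 'b.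
      (\<forall>x\<in>U. (f has_derivative blinfun_apply (f' x)) (at x)) \<and> continuous_on U f')"

definition C1_submanifold :: "'a::euclidean_space set \<Rightarrow> nat \<Rightarrow> bool" where
  "C1_submanifold N k \<longleftrightarrow>
     (\<forall>p\<in>N. \<exists>U (\<phi>::'a \<Rightarrow> 'a) (\<psi>::'a \<Rightarrow> 'a) L.
        open U \<and> p \<in> U \<and> open (\<phi> ` U) \<and> C1_on U \<phi> \<and> C1_on (\<phi> ` U) \<psi> \<and>
        (\<forall>x\<in>U. \<psi> (\<phi> x) = x) \<and>
        subspace L \<and> dim L = k \<and> \<phi> ` (U \<inter> N) = \<phi> ` U \<inter> L)"

definition tangent_space :: "'a::euclidean_space set \<Rightarrow> 'a \<Rightarrow> 'a set" where
  "tangent_space N x = {v. \<exists>(\<gamma>::real \<Rightarrow> 'a) e. e > 0 \<and> \<gamma> ` {-e<..<e} \<subseteq> N \<and> \<gamma> 0 = x \<and>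
       (\<gamma> has_vector_derivative v) (at 0)}"

definition normal_space :: "'a::euclidean_space set \<Rightarrow> 'a \<Rightarrow> 'a set" where
  "normal_space N x = {v. \<forall>t\<in>tangent_space N x. v \<bullet> t = 0}"

text \<open>The nearest point x_* (meaningful where it exists uniquely).\<close>
definition proj :: "'a::euclidean_space set \<Rightarrow> 'a \<Rightarrow> 'a" where
  "proj N x = (THE y. y \<in> N \<and> dist x y = infdist x N)"

definition projection_nbhd :: "'a::euclidean_space set \<Rightarrow> 'a \<Rightarrow> 'a set \<Rightarrow> bool" where
  "projection_nbhd N x0 V \<longleftrightarrow> open V \<and> x0 \<in> V \<and>
     (\<forall>x\<in>V. \<exists>!y. y \<in> N \<and> dist x y = infdist x N) \<and> C1_on V (proj N)"

definition V_nbhd :: "'a::euclidean_space set \<Rightarrow> 'a \<Rightarrow> real \<Rightarrow> real \<Rightarrow> 'a set" where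
  "V_nbhd N x0 R \<delta> = {x + v | x v. x \<in> cball x0 R \<inter> N \<and> v \<in> normal_space N x \<and> norm v < \<delta>}"

end

theory Submission
  imports Defs
begin

lemma pn_open: "projection_nbhd N x0 V \<Longrightarrow> open V" by (simp add: projection_nbhd_def)

lemma proj_props:
  assumes "projection_nbhd N x0 V" "y \<in> V"
  shows "proj N y \<in> N \<and> dist y (proj N y) = infdist y N"
proof -
  have "\<exists>!z. z \<in> N \<and> dist y z = infdist y N" using assms by (auto simp: projection_nbhd_def)
  then show ?thesis unfolding proj_def by (rule theI')
qed

lemma proj_unique:
  assumes "projection_nbhd N x0 V" "y \<in> V" "c \<in> N" "dist y c = infdist y N"
  shows "proj N y = c"
proof -
  have "\<exists>!z. z \<in> N \<and> dist y z = infdist y N" using assms by (auto simp: projection_nbhd_def)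
  then show ?thesis unfolding proj_def using assms(3,4) by (simp add: the1_equality)
qed

lemma proj_id:
  assumes "projection_nbhd N x0 V" "y \<in> V" "y \<in> N"
  shows "proj N y = y"
  using proj_unique[OF assms(1,2,3)] assms(3) by simp

lemma line_in_open:
  fixes x w :: "'a::real_normed_vector"
  assumes "open V" "x \<in> V"
  shows "\<exists>e>0. \<forall>s. \<bar>s\<bar> < e \<longrightarrow> x + s *\<^sub>R w \<in> V"
proof -
  obtain r where r: "r > 0" "ball x r \<subseteq> V" using assms open_contains_ball by blast
  define e where "e = r / (norm w + 1)"
  have "norm w + 1 > 0" by (smt (verit) norm_ge_zero)
  then have e: "e > 0" using r by (simp add: e_def)
  have "x + s *\<^sub>R w \<in> V" if "\<bar>s\<bar> < e" for s
  proof -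
    have "norm (s *\<^sub>R w) = \<bar>s\<bar> * norm w" by simp
    also have "\<dots> \<le> e * norm w" using that by (simp add: mult_right_mono)
    also have "\<dots> < r"
    proof -
      have "e * norm w = r * (norm w / (norm w + 1))" unfolding e_def by simp
      moreover have "norm w / (norm w + 1) < 1" using \<open>norm w + 1 > 0\<close> by simp
      ultimately show ?thesis using r(1) by (metis mult.right_neutral mult_strict_left_mono)
    qed
    finally have "dist x (x + s *\<^sub>R w) < r" by (simp add: dist_norm)
    then show ?thesis using r by auto
  qed
  then show ?thesis using e by blast
qed

lemma proj_normal:
  assumes pn: "projection_nbhd N x0 V" and y: "y \<in> V"
    and t: "t \<in> tangent_space N (proj N y)"
  shows "(y - proj N y) \<bullet> t = 0"
proof -
  let ?p = "proj N y"
  obtain \<gamma> e where e: "e > 0" "\<gamma> ` {-e<..<e} \<subseteq> N" "\<gamma> 0 = ?p"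
    and d: "(\<gamma> has_vector_derivative t) (at 0)"
    using t unfolding tangent_space_def by blast
  define g where "g s = (y - \<gamma> s) \<bullet> (y - \<gamma> s)" for s
  have "((\<lambda>s. (y - \<gamma> s) \<bullet> (y - \<gamma> s)) has_derivative
         (\<lambda>h. (y - \<gamma> 0) \<bullet> (- (h *\<^sub>R t)) + (- (h *\<^sub>R t)) \<bullet> (y - \<gamma> 0))) (at 0)"
    using d unfolding has_vector_derivative_def
    by (auto intro!: derivative_eq_intros)
  then have "DERIV g 0 :> - 2 * ((y - ?p) \<bullet> t)"
    unfolding g_def has_field_derivative_def e(3)
    by (rule has_derivative_eq_rhs) (auto simp: inner_commute algebra_simps fun_eq_iff)
  moreover have "\<forall>s. \<bar>0 - s\<bar> < e \<longrightarrow> g 0 \<le> g s"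
  proof (intro allI impI)
    fix s :: real assume "\<bar>0 - s\<bar> < e"
    then have "\<gamma> s \<in> N" using e by (force simp: abs_less_iff)
    then have "infdist y N \<le> dist y (\<gamma> s)" by (rule infdist_le)
    then have "dist y ?p \<le> dist y (\<gamma> s)" using proj_props[OF pn y] by simp
    then have "(dist y ?p)\<^sup>2 \<le> (dist y (\<gamma> s))\<^sup>2" by (simp add: power_mono)
    then show "g 0 \<le> g s" unfolding g_def e(3) by (simp add: dist_norm power2_norm_eq_inner)
  qed
  ultimately have "- 2 * ((y - ?p) \<bullet> t) = 0" using e(1) DERIV_local_min by blast
  then show ?thesis by simp
qed

lemma curve_deriv:
  fixes x w :: "'a::real_normed_vector"
  assumes "(f has_derivative E) (at x)"
  shows "((\<lambda>s::real. f (x + s *\<^sub>R w)) has_derivative (\<lambda>s. s *\<^sub>R E w)) (at 0)"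
proof -
  have lin: "linear E" using assms has_derivative_linear by blast
  have "((\<lambda>s::real. x + s *\<^sub>R w) has_derivative (\<lambda>s. s *\<^sub>R w)) (at 0)"
    by (auto intro!: derivative_eq_intros)
  moreover have "(f has_derivative E) (at (x + 0 *\<^sub>R w))" using assms by simp
  ultimately have "((\<lambda>s::real. f (x + s *\<^sub>R w)) has_derivative (\<lambda>s. E (s *\<^sub>R w))) (at 0)"
    using has_derivative_compose[of "\<lambda>s::real. x + s *\<^sub>R w" "\<lambda>s. s *\<^sub>R w" 0 UNIV f E]
    by (simp add: o_def)
  then show ?thesis using linear_scale[OF lin] by simp
qed

lemma deriv_tangent:
  assumes pn: "projection_nbhd N x0 V" and x: "x \<in> N" "x \<in> V"
    and d: "(proj N has_derivative E) (at x)"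
  shows "E w \<in> tangent_space N x"
proof -
  obtain e where e: "e > 0" "\<forall>s. \<bar>s\<bar> < e \<longrightarrow> x + s *\<^sub>R w \<in> V"
    using line_in_open[OF pn_open[OF pn] x(2)] by blast
  let ?\<gamma> = "\<lambda>s::real. proj N (x + s *\<^sub>R w)"
  have "?\<gamma> ` {-e<..<e} \<subseteq> N"
  proof
    fix z assume "z \<in> ?\<gamma> ` {-e<..<e}"
    then obtain s where s: "s \<in> {-e<..<e}" "z = ?\<gamma> s" by blast
    then have "\<bar>s\<bar> < e" by (simp add: abs_less_iff)
    then show "z \<in> N" using proj_props[OF pn] e s(2) by blast
  qed
  moreover have "?\<gamma> 0 = x" using proj_id[OF pn x(2) x(1)] by simp
  moreover have "(?\<gamma> has_vector_derivative E w) (at 0)"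
    unfolding has_vector_derivative_def using curve_deriv[OF d] by blast
  ultimately show ?thesis unfolding tangent_space_def using e(1) by blast
qed

lemma deriv_idem:
  assumes pn: "projection_nbhd N x0 V" and x: "x \<in> N" "x \<in> V"
    and d: "(proj N has_derivative E) (at x)"
  shows "E (E u) = E u"
proof -
  obtain e where e: "e > 0" "\<forall>s. \<bar>s\<bar> < e \<longrightarrow> x + s *\<^sub>R u \<in> V"
    using line_in_open[OF pn_open[OF pn] x(2)] by blast
  define \<gamma> where "\<gamma> = (\<lambda>s::real. proj N (x + s *\<^sub>R u))"
  have g0: "\<gamma> 0 = x" using proj_id[OF pn x(2) x(1)] by (simp add: \<gamma>_def)
  have dg: "(\<gamma> has_derivative (\<lambda>s. s *\<^sub>R E u)) (at 0)"
    unfolding \<gamma>_def using curve_deriv[OF d] by blast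
  have lin: "linear E" using d has_derivative_linear by blast
  have "(proj N has_derivative E) (at (\<gamma> 0))" using d g0 by simp
  then have dpg: "((\<lambda>s. proj N (\<gamma> s)) has_derivative (\<lambda>s. E (s *\<^sub>R E u))) (at 0)"
    using has_derivative_compose[OF dg, of "proj N" E] by (simp add: o_def)
  have "isCont \<gamma> 0" using has_derivative_continuous[OF dg] by simp
  then have "(\<gamma> \<longlongrightarrow> x) (at 0)" using g0 by (simp add: isCont_def)
  then have ev1: "\<forall>\<^sub>F s in at 0. \<gamma> s \<in> V"
    using x(2) pn_open[OF pn] topological_tendstoD by blast
  have ev2: "\<forall>\<^sub>F s in at (0::real). \<bar>s\<bar> < e"
    using e(1) by (auto simp: eventually_at dist_norm intro!: exI[of _ e])
  have "\<forall>\<^sub>F s in at 0. proj N (\<gamma> s) = \<gamma> s"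
    using ev1 ev2
  proof eventually_elim
    case (elim s)
    then have "\<gamma> s \<in> N" using proj_props[OF pn] e unfolding \<gamma>_def by blast
    then show ?case using proj_id[OF pn elim(1)] by blast
  qed
  then have "(\<gamma> has_derivative (\<lambda>s. E (s *\<^sub>R E u))) (at 0)"
    using has_derivative_transform_eventually[OF dpg] g0 proj_id[OF pn x(2) x(1)] by simp
  then have "(\<lambda>s. s *\<^sub>R E u) = (\<lambda>s. E (s *\<^sub>R E u))" using dg has_derivative_unique by blast
  then have "1 *\<^sub>R E u = E (1 *\<^sub>R E u)" by metis
  then show ?thesis by simp
qed

lemma main_key:
  fixes N :: "'a::euclidean_space set"
  assumes x0: "x0 \<in> N" and pn: "projection_nbhd N x0 Vs"
  shows "\<exists>r>0. ball x0 r \<subseteq> Vs \<and> (\<exists>R0>0. \<exists>\<delta>0>0. 2 * (R0 + \<delta>0) \<le> r \<and>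
     (\<forall>x v. x \<in> N \<and> dist x0 x \<le> R0 \<and> v \<in> normal_space N x \<and> norm v < \<delta>0 \<longrightarrow> proj N (x + v) = x))"
proof -
  let ?P = "proj N"
  have oV: "open Vs" and x0V: "x0 \<in> Vs" using pn by (auto simp: projection_nbhd_def)
  obtain f' :: "'a \<Rightarrow> 'a \<Rightarrow>\<^sub>L 'a" where df: "\<And>x. x \<in> Vs \<Longrightarrow> (?P has_derivative blinfun_apply (f' x)) (at x)"
    and cf: "continuous_on Vs f'"
    using pn unfolding projection_nbhd_def C1_on_def by blast
  define D where "D = f' x0"
  have DD: "blinfun_apply D (blinfun_apply D u) = blinfun_apply D u" for u
    unfolding D_def using deriv_idem[OF pn x0 x0V df[OF x0V]] .
  define H where "H y = (y - ?P y) + blinfun_apply D (2 *\<^sub>R ?P y - y)" for y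
  define H' where "H' y = id_blinfun - f' y + (D o\<^sub>L (2 *\<^sub>R f' y - id_blinfun))" for y
  have derH: "(H has_derivative blinfun_apply (H' y)) (at y)" if "y \<in> Vs" for y
  proof -
    have dP: "(?P has_derivative blinfun_apply (f' y)) (at y)" using df[OF that] .
    have d1: "((\<lambda>y. y - ?P y) has_derivative (\<lambda>h. h - blinfun_apply (f' y) h)) (at y)"
      using has_derivative_diff[OF has_derivative_ident dP] .
    have d2: "((\<lambda>y. 2 *\<^sub>R ?P y - y) has_derivative (\<lambda>h. 2 *\<^sub>R blinfun_apply (f' y) h - h)) (at y)"
      using has_derivative_diff[OF has_derivative_scaleR_right[OF dP] has_derivative_ident] .
    have d3: "((\<lambda>y. blinfun_apply D (2 *\<^sub>R ?P y - y)) has_derivative (\<lambda>h. blinfun_apply D (2 *\<^sub>R blinfun_apply (f' y) h - h))) (at y)"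
      using bounded_linear.has_derivative[OF blinfun.bounded_linear_right d2] .
    show ?thesis unfolding H_def[abs_def]
      by (rule has_derivative_eq_rhs[OF has_derivative_add[OF d1 d3]])
         (simp add: fun_eq_iff H'_def blinfun.bilinear_simps)
  qed
  have contH': "continuous_on Vs H'"
    unfolding H'_def by (intro continuous_intros cf)
  have H'0: "id_blinfun o\<^sub>L H' x0 = id_blinfun"
  proof (rule blinfun_eqI)
    fix h
    have "blinfun_apply (H' x0) h = h - blinfun_apply D h + blinfun_apply D (2 *\<^sub>R blinfun_apply D h - h)"
      by (simp add: H'_def D_def blinfun.bilinear_simps)
    also have "\<dots> = h" by (simp only: blinfun.diff_right blinfun.scaleR_right DD) (simp add: algebra_simps scaleR_2)
    finally show "blinfun_apply (id_blinfun o\<^sub>L H' x0) h = blinfun_apply id_blinfun h" by simp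
  qed
  obtain r where r: "r > 0" "ball x0 r \<subseteq> Vs" using oV x0V open_contains_ball by blast
  have Px0: "?P x0 = x0" using proj_id[OF pn x0V x0] .
  have Hx0: "H x0 = blinfun_apply D x0"
    unfolding H_def Px0 by (simp add: blinfun.bilinear_simps scaleR_2)
  have derH2: "\<And>y. y \<in> ball x0 r \<Longrightarrow> (H has_derivative blinfun_apply (H' y)) (at y)"
    using derH r(2) by blast
  have contH2: "continuous_on (ball x0 r) H'" using continuous_on_subset[OF contH' r(2)] .
  obtain U1 V1 g1 g1' where U1: "open U1" "U1 \<subseteq> ball x0 r" "x0 \<in> U1" and hom1: "homeomorphism U1 V1 H g1"
    using inverse_function_theorem[OF open_ball derH2 contH2 _ H'0] r(1) by (metis centre_in_ball)
  have injH: "a = b" if "a \<in> U1" "b \<in> U1" "H a = H b" for a b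
    using hom1 that unfolding homeomorphism_def by metis
  obtain \<rho> where \<rho>: "\<rho> > 0" "ball x0 \<rho> \<subseteq> U1" using U1 open_contains_ball by blast
  have \<rho>r: "ball x0 \<rho> \<subseteq> Vs" using \<rho> U1 r by blast
  have derH3: "\<And>y. y \<in> ball x0 (\<rho>/2) \<Longrightarrow> (H has_derivative blinfun_apply (H' y)) (at y)"
  proof -
    fix y assume "y \<in> ball x0 (\<rho>/2)"
    then have "y \<in> Vs" using \<rho>r \<rho>(1) by (auto simp: subset_iff)
    then show "(H has_derivative blinfun_apply (H' y)) (at y)" by (rule derH)
  qed
  have contH3: "continuous_on (ball x0 (\<rho>/2)) H'" by (rule continuous_on_subset[OF contH']) (use \<rho>r \<rho>(1) in \<open>auto simp: subset_iff\<close>)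
  obtain U2 V2 g2 g2' where U2: "open U2" "U2 \<subseteq> ball x0 (\<rho>/2)" "x0 \<in> U2" and V2: "open V2" "H x0 \<in> V2"
    and hom2: "homeomorphism U2 V2 H g2"
    using inverse_function_theorem[OF open_ball derH3 contH3 _ H'0] \<rho>(1) by (metis centre_in_ball half_gt_zero)
  have imU2: "H ` U2 = V2" using hom2 unfolding homeomorphism_def by blast
  obtain \<epsilon> where \<epsilon>: "\<epsilon> > 0" "ball (H x0) \<epsilon> \<subseteq> V2" using V2 open_contains_ball by blast
  obtain \<eta> where \<eta>: "\<eta> > 0" "\<And>x. x \<in> Vs \<Longrightarrow> dist x x0 < \<eta> \<Longrightarrow> dist (f' x) (f' x0) < 1/2"
    using cf x0V unfolding continuous_on_iff by (metis half_gt_zero less_numeral_extra(1))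
  define R0 where "R0 = min (min (\<rho>/4) (\<eta>/2)) (min (r/4) (\<epsilon>/(2*(norm D + 1))))"
  define \<delta>0 where "\<delta>0 = min (r/4) (\<epsilon>/(2*(norm (id_blinfun - D) + 1)))"
  have nD: "norm D + 1 > 0" "norm (id_blinfun - D) + 1 > 0" by (smt (verit) norm_ge_zero)+
  have R0: "R0 > 0" unfolding R0_def using \<rho> \<eta> r \<epsilon> nD by auto
  have d0: "\<delta>0 > 0" unfolding \<delta>0_def using r \<epsilon> nD by auto
  have "R0 \<le> r/4" "\<delta>0 \<le> r/4" unfolding R0_def \<delta>0_def by (meson min.cobounded1 min.cobounded2 order_trans)+
  then have sum: "2 * (R0 + \<delta>0) \<le> r" by (simp add: field_simps)
  have K: "?P (x + v) = x" if x: "x \<in> N" "dist x0 x \<le> R0" and v: "v \<in> normal_space N x" "norm v < \<delta>0" for x v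
  proof -
    have "R0 \<le> \<rho>/4" "R0 \<le> \<eta>/2" unfolding R0_def by (meson min.cobounded1 min.cobounded2 order_trans)+
    note R0b = this
    have xr: "x \<in> ball x0 \<rho>" using x(2) \<rho> R0b by auto
    then have xU1: "x \<in> U1" and xV: "x \<in> Vs" using \<rho> \<rho>r by auto
    define \<tau> where "\<tau> = blinfun_apply D x + (v - blinfun_apply D v)"
    have "norm (blinfun_apply D (x - x0)) \<le> norm D * norm (x - x0)" by (rule norm_blinfun)
    also have "\<dots> \<le> norm D * R0" using x(2) by (simp add: dist_norm norm_minus_commute mult_left_mono)
    also have "\<dots> \<le> norm D * (\<epsilon>/(2*(norm D + 1)))"
    proof -
      have "R0 \<le> \<epsilon>/(2*(norm D + 1))" unfolding R0_def by (meson min.cobounded1 min.cobounded2 order_trans)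
      then show ?thesis by (rule mult_left_mono) simp
    qed
    also have "\<dots> \<le> \<epsilon>/2"
    proof -
      have "norm D * (\<epsilon>/(2*(norm D + 1))) = (\<epsilon>/2) * (norm D / (norm D + 1))" by simp
      also have "\<dots> \<le> (\<epsilon>/2) * 1" using nD \<epsilon> by (intro mult_left_mono) auto
      finally show ?thesis by simp
    qed
    finally have b1: "norm (blinfun_apply D (x - x0)) \<le> \<epsilon>/2" .
    have "norm (blinfun_apply (id_blinfun - D) v) \<le> norm (id_blinfun - D) * norm v" by (rule norm_blinfun)
    also have "\<dots> \<le> norm (id_blinfun - D) * \<delta>0" using v(2) by (simp add: mult_left_mono)
    also have "\<dots> \<le> norm (id_blinfun - D) * (\<epsilon>/(2*(norm (id_blinfun - D) + 1)))"
    proof -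
      have "\<delta>0 \<le> \<epsilon>/(2*(norm (id_blinfun - D) + 1))" unfolding \<delta>0_def by (meson min.cobounded2)
      then show ?thesis by (rule mult_left_mono) simp
    qed
    also have "\<dots> < \<epsilon>/2"
    proof -
      have "norm (id_blinfun - D) * (\<epsilon>/(2*(norm (id_blinfun - D) + 1))) = (\<epsilon>/2) * (norm (id_blinfun - D) / (norm (id_blinfun - D) + 1))" by simp
      also have "\<dots> < (\<epsilon>/2) * 1" using nD \<epsilon> by (intro mult_strict_left_mono) auto
      finally show ?thesis by simp
    qed
    finally have b2: "norm (v - blinfun_apply D v) < \<epsilon>/2" by (simp add: blinfun.bilinear_simps)
    have "\<tau> - H x0 = blinfun_apply D (x - x0) + (v - blinfun_apply D v)"
      unfolding \<tau>_def Hx0 by (simp add: blinfun.bilinear_simps)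
    then have "norm (\<tau> - H x0) < \<epsilon>" using b1 b2 norm_triangle_ineq[of "blinfun_apply D (x - x0)" "v - blinfun_apply D v"] by simp
    then have "\<tau> \<in> V2" using \<epsilon> by (auto simp: dist_norm norm_minus_commute)
    then obtain z where z: "z \<in> U2" "H z = \<tau>" using imU2 by auto
    have zb: "dist x0 z < \<rho>/2" using z U2 by auto
    then have zV: "z \<in> Vs" using \<rho>r \<rho>(1) by (auto simp: subset_iff)
    have Pz: "?P z \<in> N" "dist z (?P z) = infdist z N" using proj_props[OF pn zV] by auto
    have "dist z (?P z) \<le> dist z x0" using Pz(2) infdist_le[OF x0, of z] by simp
    then have "dist x0 (?P z) < \<rho>" using zb dist_triangle[of x0 "?P z" z] by (simp add: dist_commute)
    then have PzU: "?P z \<in> U1" and PzV: "?P z \<in> Vs" using \<rho> \<rho>r by auto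
    have PPz: "?P (?P z) = ?P z" using proj_id[OF pn PzV Pz(1)] .
    have Px: "?P x = x" using proj_id[OF pn xV x(1)] .
    have "blinfun_apply D (H z) = blinfun_apply D (?P z)"
      unfolding H_def by (simp only: blinfun.diff_right blinfun.add_right blinfun.scaleR_right DD) (simp add: algebra_simps scaleR_2)
    moreover have "blinfun_apply D \<tau> = blinfun_apply D x"
      unfolding \<tau>_def by (simp only: blinfun.diff_right blinfun.add_right blinfun.scaleR_right DD) (simp add: algebra_simps)
    ultimately have DPz: "blinfun_apply D (?P z) = blinfun_apply D x" using z(2) by simp
    have "H (?P z) = blinfun_apply D (?P z)" unfolding H_def PPz by (simp add: blinfun.bilinear_simps scaleR_2)
    moreover have "H x = blinfun_apply D x" unfolding H_def Px by (simp add: blinfun.bilinear_simps scaleR_2)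
    ultimately have PzX: "?P z = x" using injH[OF PzU xU1] DPz by simp
    define w where "w = z - x - v"
    have "z - x + blinfun_apply D (2 *\<^sub>R x - z) = \<tau>" using z(2) unfolding H_def PzX .
    then have e1: "z - x + (2 *\<^sub>R blinfun_apply D x - blinfun_apply D z) = blinfun_apply D x + (v - blinfun_apply D v)"
      unfolding \<tau>_def by (simp only: blinfun.diff_right blinfun.scaleR_right)
    have "w - blinfun_apply D w = (z - x + (2 *\<^sub>R blinfun_apply D x - blinfun_apply D z)) - (blinfun_apply D x + (v - blinfun_apply D v))"
      unfolding w_def by (simp only: blinfun.diff_right) (simp add: scaleR_2 algebra_simps)
    then have "w - blinfun_apply D w = 0" using e1 by simp
    then have Dw: "blinfun_apply D w = w" by simp
    have wn: "w \<bullet> t = 0" if "t \<in> tangent_space N x" for t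
    proof -
      have "(z - ?P z) \<bullet> t = 0" using proj_normal[OF pn zV] that PzX by simp
      moreover have "v \<bullet> t = 0" using v(1) that unfolding normal_space_def by blast
      ultimately show ?thesis unfolding w_def PzX by (simp add: inner_diff_left)
    qed
    let ?E = "blinfun_apply (f' x)"
    have "?E w \<in> tangent_space N x" using deriv_tangent[OF pn x(1) xV df[OF xV]] .
    then have wE: "w \<bullet> ?E w = 0" using wn by blast
    have "dist x x0 < \<eta>" using x(2) R0b \<eta>(1) by (simp add: dist_commute)
    then have nE: "norm (D - f' x) < 1/2" using \<eta>(2)[OF xV] by (simp add: D_def dist_norm norm_minus_commute)
    have "w \<bullet> w = w \<bullet> (blinfun_apply D w - ?E w)" using Dw wE by (simp add: inner_diff_right)
    also have "\<dots> \<le> norm w * norm (blinfun_apply D w - ?E w)" by (rule norm_cauchy_schwarz)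
    also have "\<dots> = norm w * norm (blinfun_apply (D - f' x) w)" by (simp add: blinfun.bilinear_simps)
    also have "\<dots> \<le> norm w * (norm (D - f' x) * norm w)" by (simp add: mult_left_mono norm_blinfun)
    finally have ww: "norm w * norm w \<le> norm w * (norm (D - f' x) * norm w)" by (simp add: dot_square_norm power2_eq_square)
    have "w = 0"
    proof (rule ccontr)
      assume "w \<noteq> 0"
      then have "norm w > 0" by simp
      with ww have "norm w \<le> norm (D - f' x) * norm w" by simp
      moreover have "norm (D - f' x) * norm w < 1 * norm w"
        using nE \<open>norm w > 0\<close> by (intro mult_strict_right_mono) auto
      ultimately show False by simp
    qed
    then have "z = x + v" unfolding w_def by (simp add: algebra_simps)
    then show ?thesis using PzX by simp
  qed
  show ?thesis using r R0 d0 sum K by blast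
qed

theorem proposition2p5:
  fixes N :: "'a::euclidean_space set" and k :: nat
  assumes "1 \<le> k" and "k < DIM('a)"
    and "N \<noteq> {}" and "C1_submanifold N k"
  shows "\<forall>x0\<in>N. \<forall>Vs. projection_nbhd N x0 Vs \<longrightarrow>
           (\<exists>R0>0. \<exists>\<delta>0>0. \<forall>R \<delta>. 0 < R \<and> R \<le> R0 \<and> 0 < \<delta> \<and> \<delta> \<le> \<delta>0 \<longrightarrow>
              closure (V_nbhd N x0 R \<delta>) \<subseteq> Vs \<and>
              V_nbhd N x0 R \<delta> = {x. infdist x N = infdist x (cball x0 R \<inter> N) \<and> infdist x N < \<delta>} \<and>
              (\<forall>x\<in>cball x0 R \<inter> N. \<forall>v\<in>normal_space N x. norm v < \<delta> \<longrightarrow> proj N (x + v) = x))"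
proof (intro ballI allI impI)
  fix x0 Vs assume x0: "x0 \<in> N" and pn: "projection_nbhd N x0 Vs"
  obtain r R0 \<delta>0 where r: "r > 0" "ball x0 r \<subseteq> Vs" and R0: "R0 > 0" and d0: "\<delta>0 > 0"
    and sum: "2 * (R0 + \<delta>0) \<le> r"
    and K: "\<And>x v. x \<in> N \<Longrightarrow> dist x0 x \<le> R0 \<Longrightarrow> v \<in> normal_space N x \<Longrightarrow> norm v < \<delta>0 \<Longrightarrow> proj N (x + v) = x"
    using main_key[OF x0 pn] by blast
  show "\<exists>R0>0. \<exists>\<delta>0>0. \<forall>R \<delta>. 0 < R \<and> R \<le> R0 \<and> 0 < \<delta> \<and> \<delta> \<le> \<delta>0 \<longrightarrow>
              closure (V_nbhd N x0 R \<delta>) \<subseteq> Vs \<and>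
              V_nbhd N x0 R \<delta> = {x. infdist x N = infdist x (cball x0 R \<inter> N) \<and> infdist x N < \<delta>} \<and>
              (\<forall>x\<in>cball x0 R \<inter> N. \<forall>v\<in>normal_space N x. norm v < \<delta> \<longrightarrow> proj N (x + v) = x)"
  proof (intro exI conjI allI impI)
    show "R0 > 0" "\<delta>0 > 0" using R0 d0 by auto
    fix R \<delta> :: real assume Rd: "0 < R \<and> R \<le> R0 \<and> 0 < \<delta> \<and> \<delta> \<le> \<delta>0"
    let ?C = "cball x0 R \<inter> N"
    show K2: "\<forall>x\<in>?C. \<forall>v\<in>normal_space N x. norm v < \<delta> \<longrightarrow> proj N (x + v) = x"
      using K Rd by auto
    have cbV: "cball x0 (R + \<delta>) \<subseteq> Vs"
    proof -
      have "cball x0 (R + \<delta>) \<subseteq> ball x0 r" using Rd sum r(1) by (intro cball_subset_ball_iff[THEN iffD2]) auto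
      then show ?thesis using r(2) by blast
    qed
    have Vsub: "V_nbhd N x0 R \<delta> \<subseteq> cball x0 (R + \<delta>)"
    proof
      fix y assume "y \<in> V_nbhd N x0 R \<delta>"
      then obtain x v where y: "y = x + v" "x \<in> ?C" "norm v < \<delta>" unfolding V_nbhd_def by blast
      have "dist x0 y \<le> dist x0 x + dist x y" by (rule dist_triangle)
      also have "dist x y = norm v" using y(1) by (simp add: dist_norm)
      finally show "y \<in> cball x0 (R + \<delta>)" using y(2,3) by auto
    qed
    show "closure (V_nbhd N x0 R \<delta>) \<subseteq> Vs"
      using closure_minimal[OF Vsub closed_cball] cbV by blast
    have "x0 \<in> ?C" using x0 Rd by auto
    then have Cne: "?C \<noteq> {}" by blast
    have Ccl: "closed ?C"
    proof -
      have "closure ?C \<subseteq> ?C"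
      proof
        fix y assume y: "y \<in> closure ?C"
        then have yc: "y \<in> cball x0 R" using closure_minimal[of ?C "cball x0 R"] by auto
        then have yV: "y \<in> Vs" using cbV Rd by auto
        have "y \<in> closure N" using y closure_mono[of ?C N] by blast
        then have "infdist y N = 0" using in_closure_iff_infdist_zero x0 by blast
        then have "dist y (proj N y) = 0" using proj_props[OF pn yV] by simp
        then have "y \<in> N" using proj_props[OF pn yV] by (metis dist_eq_0_iff)
        then show "y \<in> ?C" using yc by blast
      qed
      then show ?thesis using closure_subset_eq by blast
    qed
    show "V_nbhd N x0 R \<delta> = {x. infdist x N = infdist x ?C \<and> infdist x N < \<delta>}"
    proof (intro equalityI subsetI)
      fix y assume yV: "y \<in> V_nbhd N x0 R \<delta>"
      then obtain x v where y: "y = x + v" "x \<in> ?C" "v \<in> normal_space N x" "norm v < \<delta>" unfolding V_nbhd_def by blast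
      have Py: "proj N y = x" using K2 y by blast
      have yVs: "y \<in> Vs" using Vsub cbV yV by blast
      have i1: "infdist y N = norm v" using proj_props[OF pn yVs] Py y(1) by (simp add: dist_norm)
      have "infdist y ?C \<le> dist y x" using y(2) by (rule infdist_le)
      moreover have "infdist y N \<le> infdist y ?C" by (rule infdist_mono) (use Cne in auto)
      ultimately have "infdist y N = infdist y ?C" using i1 y(1) by (simp add: dist_norm)
      then show "y \<in> {x. infdist x N = infdist x ?C \<and> infdist x N < \<delta>}" using i1 y(4) by simp
    next
      fix y assume "y \<in> {x. infdist x N = infdist x ?C \<and> infdist x N < \<delta>}"
      then have y: "infdist y N = infdist y ?C" "infdist y N < \<delta>" by auto
      obtain c where c: "c \<in> ?C" "infdist y ?C = dist y c" using infdist_attains_inf[OF Ccl Cne] by blast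
      have "dist x0 y \<le> dist x0 c + dist c y" by (rule dist_triangle)
      then have "y \<in> cball x0 (R + \<delta>)" using c y by (auto simp: dist_commute)
      then have yVs: "y \<in> Vs" using cbV by blast
      have Py: "proj N y = c" using proj_unique[OF pn yVs] c y by auto
      define v where "v = y - c"
      have "v \<in> normal_space N c" unfolding normal_space_def v_def using proj_normal[OF pn yVs] Py by auto
      moreover have "norm v < \<delta>" using c y by (simp add: v_def dist_norm)
      moreover have "y = c + v" by (simp add: v_def)
      ultimately show "y \<in> V_nbhd N x0 R \<delta>" unfolding V_nbhd_def using c(1) by blast
    qed
  qed
qed

end
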